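(* Let $\alpha>0$ and $k\ge 2$ be an integer. Then $$\sum_{\sigma\in\mathfrak S_k}\det\Big[\Gamma(j+\sigma(i)\alpha)\prod_{r=1}^{i-1}(r+\sigma(i)\alpha)\Big]_{1\le i,j\le k}=\alpha^{k(k-1)}\prod_{j=1}^k ((j-1)!)^2\,\Gamma(1+\alpha j)>0.$$
   Context: $\mathfrak S_k$ is the symmetric group on $\{1,\dots,k\}$; in the matrix, $i$ is the row index and $j$ the column index, and empty products equal $1$. *)

theory Defs
  imports "HOL-Analysis.Analysis" "Jordan_Normal_Form.Determinant"
begin

definition gamma_perm_mat :: "nat \<Rightarrow> real \<Rightarrow> (nat \<Rightarrow> nat) \<Rightarrow> real mat" where
  "gamma_perm_mat k \<alpha> \<sigma> = mat k k (\<lambda>(i0, j0).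
     let i = i0 + 1; j = j0 + 1 in
     Gamma (real j + real (\<sigma> i) * \<alpha>) *
     (\<Prod>r = 1..i - 1. (real r + real (\<sigma> i) * \<alpha>)))"

end

theory Submission
  imports Defs
begin

lemma Gamma_poch: fixes y :: real assumes "y \<ge> 0"
  shows "Gamma (1 + y + real n) = Gamma (1 + y) * pochhammer (1 + y) n"
proof (induction n)
  case 0 then show ?case by simp
next
  case (Suc n)
  have "1 + y + real n \<notin> \<int>\<^sub>\<le>\<^sub>0" using assms nonpos_Ints_nonpos by force
  then have "Gamma (1 + y + real n + 1) = (1 + y + real n) * Gamma (1 + y + real n)"
    by (rule Gamma_plus1)
  then show ?case using Suc by (simp add: pochhammer_Suc add_ac)
qed

lemma prod_poch: fixes y :: real
  shows "(\<Prod>r = 1..n. real r + y) = pochhammer (1 + y) n"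
  by (induction n) (simp_all add: pochhammer_Suc add_ac)

lemma det_rowscale:
  fixes f :: "nat \<Rightarrow> nat \<Rightarrow> 'a::comm_ring_1"
  shows "det (mat n n (\<lambda>(i,j). a i * f i j)) = (\<Prod>i<n. a i) * det (mat n n (\<lambda>(i,j). f i j))"
proof -
  have "det (mat n n (\<lambda>(i,j). a i * f i j)) = (\<Sum>p\<in>{p. p permutes {0..<n}}. (\<Prod>i<n. a i) * (signof p * (\<Prod>i = 0..<n. f i (p i))))"
    unfolding det_def' [of _ n, OF mat_carrier]
  proof (rule sum.cong)
    fix p assume p: "p \<in> {p. p permutes {0..<n}}"
    have "\<And>i. i < n \<Longrightarrow> p i < n" using p permutes_in_image by fastforce
    then have "(\<Prod>i = 0..<n. mat n n (\<lambda>(i,j). a i * f i j) $$ (i, p i)) = (\<Prod>i = 0..<n. a i * f i (p i))"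
      by (intro prod.cong) auto
    also have "\<dots> = (\<Prod>i<n. a i) * (\<Prod>i = 0..<n. f i (p i))"
      by (simp add: prod.distrib atLeast0LessThan)
    finally show "signof p * (\<Prod>i = 0..<n. mat n n (\<lambda>(i,j). a i * f i j) $$ (i, p i)) = (\<Prod>i<n. a i) * (signof p * (\<Prod>i = 0..<n. f i (p i)))"
      by simp
  qed simp
  also have "\<dots> = (\<Prod>i<n. a i) * (\<Sum>p\<in>{p. p permutes {0..<n}}. signof p * (\<Prod>i = 0..<n. f i (p i)))"
    by (simp add: sum_distrib_left)
  also have "(\<Sum>p\<in>{p. p permutes {0..<n}}. signof p * (\<Prod>i = 0..<n. f i (p i))) = det (mat n n (\<lambda>(i,j). f i j))"
    unfolding det_def' [of _ n, OF mat_carrier]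
  proof (rule sum.cong)
    fix p assume p: "p \<in> {p. p permutes {0..<n}}"
    have "\<And>i. i < n \<Longrightarrow> p i < n" using p permutes_in_image by fastforce
    then show "signof p * (\<Prod>i = 0..<n. f i (p i)) = signof p * (\<Prod>i = 0..<n. mat n n (\<lambda>(i,j). f i j) $$ (i, p i))"
      by (intro arg_cong[where f="\<lambda>x. _ * x"] prod.cong) auto
  qed simp
  finally show ?thesis .
qed


lemma vander:
  fixes g :: "nat \<Rightarrow> real \<Rightarrow> real" and c :: "nat \<Rightarrow> real"
  assumes g0: "\<And>t. g 0 t = 1" and gS: "\<And>j t. g (Suc j) t = (t + c j) * g j t"
  shows "det (mat n n (\<lambda>(i,j). g j (x i))) = (\<Prod>j<n. \<Prod>i<j. x j - x i)"
proof (induction n arbitrary: x)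
  case 0
  then show ?case by (simp add: det_dim_zero[OF mat_carrier])
next
  case (Suc n)
  define A where "A = mat (Suc n) (Suc n) (\<lambda>(i,j). g j (x i))"
  define U where "U = mat (Suc n) (Suc n) (\<lambda>(i,j). if i = j then 1 else if j = Suc i then - (x 0 + c i) else (0::real))"
  define B where "B = mat (Suc n) (Suc n) (\<lambda>(i,j). if j = 0 then 1 else (x i - x 0) * g (j - 1) (x i))"
  have AU: "A * U = B"
  proof (rule eq_matI)
    fix i j assume i: "i < dim_row B" and j: "j < dim_col B"
    then have i': "i < Suc n" and j': "j < Suc n" by (auto simp: B_def)
    have "(A * U) $$ (i,j) = (\<Sum>l<Suc n. g l (x i) * U $$ (l, j))"
      using i' j' by (simp add: A_def U_def scalar_prod_def lessThan_atLeast0)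
    also have "\<dots> = B $$ (i,j)"
    proof (cases j)
      case 0
      have "(\<Sum>l<Suc n. g l (x i) * U $$ (l, j)) = (\<Sum>l<Suc n. if l = 0 then g l (x i) else 0)"
        using j' by (intro sum.cong) (auto simp: U_def 0)
      also have "\<dots> = 1" by (simp add: g0)
      finally show ?thesis using i' by (simp add: B_def 0)
    next
      case (Suc m)
      have "(\<Sum>l<Suc n. g l (x i) * U $$ (l, j)) = (\<Sum>l<Suc n. (if l = Suc m then g (Suc m) (x i) else 0) + (if l = m then - (x 0 + c m) * g m (x i) else 0))"
        using j' by (intro sum.cong) (auto simp: U_def Suc)
      also have "\<dots> = g (Suc m) (x i) - (x 0 + c m) * g m (x i)"
        using j' Suc by (simp add: sum.distrib algebra_simps)
      also have "\<dots> = B $$ (i,j)" using i' j' Suc by (simp add: B_def gS algebra_simps)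
      finally show ?thesis .
    qed
    finally show "(A * U) $$ (i,j) = B $$ (i,j)" .
  qed (auto simp: A_def U_def B_def)
  have "det U = 1"
  proof -
    have "upper_triangular U" by (auto simp: U_def)
    then have "det U = prod_list (diag_mat U)" by (rule det_upper_triangular[where n="Suc n"]) (simp add: U_def)
    also have "\<dots> = 1" unfolding prod_list_diag_prod by (simp add: U_def)
    finally show ?thesis .
  qed
  then have "det A = det B" using det_mult[of A "Suc n" U] AU by (simp add: A_def U_def)
  also have "det B = (\<Sum>j<Suc n. B $$ (0,j) * cofactor B 0 j)"
    by (rule laplace_expansion_row) (auto simp: B_def)
  also have "\<dots> = cofactor B 0 0"
    by (subst sum.lessThan_Suc_shift) (simp add: B_def)
  also have "\<dots> = det (mat n n (\<lambda>(i,j). (x (Suc i) - x 0) * g j (x (Suc i))))"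
    unfolding cofactor_def
    by (simp, rule arg_cong[where f=det], rule eq_matI) (auto simp: mat_delete_def B_def)
  also have "\<dots> = (\<Prod>i<n. x (Suc i) - x 0) * det (mat n n (\<lambda>(i,j). g j (x (Suc i))))"
    by (rule det_rowscale)
  also have "\<dots> = (\<Prod>i<n. x (Suc i) - x 0) * (\<Prod>j<n. \<Prod>i<j. x (Suc j) - x (Suc i))"
    using Suc.IH[of "\<lambda>i. x (Suc i)"] by simp
  also have "\<dots> = (\<Prod>j<Suc n. \<Prod>i<j. x j - x i)"
    by (simp add: prod.lessThan_Suc_shift prod.distrib del: prod.lessThan_Suc)
  finally show ?case by (simp add: A_def)
qed


lemma prod_diff_fact: "(\<Prod>i<j. real j - real i) = fact j"
proof (induction j)
  case 0 then show ?case by simp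
next
  case (Suc j)
  have "(\<Prod>i<Suc j. real (Suc j) - real i) = real (Suc j) * (\<Prod>i<j. real (Suc j) - real (Suc i))"
    by (simp add: prod.lessThan_Suc_shift del: prod.lessThan_Suc)
  also have "(\<Prod>i<j. real (Suc j) - real (Suc i)) = (\<Prod>i<j. real j - real i)" by simp
  finally show ?case using Suc by simp
qed

lemma prod_shift1: "(\<Prod>j = 1..k. (F j :: real)) = (\<Prod>j<k. F (Suc j))"
  by (induction k) auto

lemma pow_tri: "(\<Prod>j<k. (a::real) ^ (2 * j)) = a ^ (k * (k - 1))"
proof (induction k)
  case 0 then show ?case by simp
next
  case (Suc k)
  have e: "k * (k - 1) + 2 * k = k + k * k" by (cases k) auto
  have "a ^ (k * (k - 1)) * a ^ (2 * k) = a ^ (k + k * k)" by (simp only: power_add[symmetric] e)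
  then show ?case using Suc by simp
qed

definition hperm :: "nat \<Rightarrow> (nat \<Rightarrow> nat) \<Rightarrow> nat \<Rightarrow> nat" where
  "hperm k \<tau> = (\<lambda>i. if i \<in> {1..k} then Suc (\<tau> (i - 1)) else i)"

definition hinv :: "nat \<Rightarrow> (nat \<Rightarrow> nat) \<Rightarrow> nat \<Rightarrow> nat" where
  "hinv k \<sigma> = (\<lambda>i. if i < k then \<sigma> (Suc i) - 1 else i)"

lemma hperm_permutes: assumes "\<tau> permutes {0..<k}" shows "hperm k \<tau> permutes {1..k}"
proof (rule bij_imp_permutes)
  have t: "\<And>i. i < k \<Longrightarrow> \<tau> i < k" using assms permutes_in_image by fastforce
  have it: "Hilbert_Choice.inv \<tau> permutes {0..<k}" using assms by (rule permutes_inv)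
  then have t': "\<And>i. i < k \<Longrightarrow> Hilbert_Choice.inv \<tau> i < k" using permutes_in_image by fastforce
  have t2: "\<And>a. a \<in> {1..k} \<Longrightarrow> Suc (\<tau> (a - 1)) \<in> {1..k}"
  proof -
    fix a :: nat assume a: "a \<in> {1..k}" then have "a - 1 < k" by auto
    from t[OF this] show "Suc (\<tau> (a - 1)) \<in> {1..k}" by auto
  qed
  have t2': "\<And>a. a \<in> {1..k} \<Longrightarrow> Suc (Hilbert_Choice.inv \<tau> (a - 1)) \<in> {1..k}"
  proof -
    fix a :: nat assume a: "a \<in> {1..k}" then have "a - 1 < k" by auto
    from t'[OF this] show "Suc (Hilbert_Choice.inv \<tau> (a - 1)) \<in> {1..k}" by auto
  qed
  show "bij_betw (hperm k \<tau>) {1..k} {1..k}"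
  proof (rule bij_betw_byWitness[where f'="hperm k (Hilbert_Choice.inv \<tau>)"])
    show "\<forall>a\<in>{1..k}. hperm k (Hilbert_Choice.inv \<tau>) (hperm k \<tau> a) = a"
      using t2 permutes_inverses(2)[OF assms] by (auto simp: hperm_def)
    show "\<forall>a\<in>{1..k}. hperm k \<tau> (hperm k (Hilbert_Choice.inv \<tau>) a) = a"
      using t2' permutes_inverses(1)[OF assms] by (auto simp: hperm_def)
    show "hperm k \<tau> ` {1..k} \<subseteq> {1..k}" using t2 by (auto simp: hperm_def)
    show "hperm k (Hilbert_Choice.inv \<tau>) ` {1..k} \<subseteq> {1..k}" using t2' by (auto simp: hperm_def)
  qed
  show "\<And>x. x \<notin> {1..k} \<Longrightarrow> hperm k \<tau> x = x" by (auto simp: hperm_def)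
qed

lemma hinv_permutes: assumes "\<sigma> permutes {1..k}" shows "hinv k \<sigma> permutes {0..<k}"
proof (rule bij_imp_permutes)
  have t: "\<And>i. i \<in> {1..k} \<Longrightarrow> \<sigma> i \<in> {1..k}" using assms permutes_in_image by fastforce
  have it: "Hilbert_Choice.inv \<sigma> permutes {1..k}" using assms by (rule permutes_inv)
  then have t': "\<And>i. i \<in> {1..k} \<Longrightarrow> Hilbert_Choice.inv \<sigma> i \<in> {1..k}" using permutes_in_image by fastforce
  have a: "\<And>i. \<sigma> (Hilbert_Choice.inv \<sigma> i) = i" "\<And>i. Hilbert_Choice.inv \<sigma> (\<sigma> i) = i" using permutes_inverses[OF assms] by auto
  show "bij_betw (hinv k \<sigma>) {0..<k} {0..<k}"
  proof (rule bij_betw_byWitness[where f'="hinv k (Hilbert_Choice.inv \<sigma>)"])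
    show "\<forall>a\<in>{0..<k}. hinv k (Hilbert_Choice.inv \<sigma>) (hinv k \<sigma> a) = a"
    proof
      fix a assume "a \<in> {0..<k}"
      then have "\<sigma> (Suc a) \<in> {1..k}" using t by auto
      then show "hinv k (Hilbert_Choice.inv \<sigma>) (hinv k \<sigma> a) = a" using a `a \<in> {0..<k}` by (auto simp: hinv_def)
    qed
    show "\<forall>a\<in>{0..<k}. hinv k \<sigma> (hinv k (Hilbert_Choice.inv \<sigma>) a) = a"
    proof
      fix a assume "a \<in> {0..<k}"
      then have "Hilbert_Choice.inv \<sigma> (Suc a) \<in> {1..k}" using t' by auto
      then show "hinv k \<sigma> (hinv k (Hilbert_Choice.inv \<sigma>) a) = a" using a `a \<in> {0..<k}` by (auto simp: hinv_def)
    qed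
    show "hinv k \<sigma> ` {0..<k} \<subseteq> {0..<k}"
    proof
      fix y assume "y \<in> hinv k \<sigma> ` {0..<k}"
      then obtain a where "a < k" "y = \<sigma> (Suc a) - 1" by (auto simp: hinv_def)
      moreover have "\<sigma> (Suc a) \<in> {1..k}" using t `a < k` by auto
      ultimately show "y \<in> {0..<k}" by auto
    qed
    show "hinv k (Hilbert_Choice.inv \<sigma>) ` {0..<k} \<subseteq> {0..<k}"
    proof
      fix y assume "y \<in> hinv k (Hilbert_Choice.inv \<sigma>) ` {0..<k}"
      then obtain a where "a < k" "y = Hilbert_Choice.inv \<sigma> (Suc a) - 1" by (auto simp: hinv_def)
      moreover have "Hilbert_Choice.inv \<sigma> (Suc a) \<in> {1..k}" using t' `a < k` by auto
      ultimately show "y \<in> {0..<k}" by auto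
    qed
  qed
  show "\<And>x. x \<notin> {0..<k} \<Longrightarrow> hinv k \<sigma> x = x" by (auto simp: hinv_def)
qed

lemma hperm_bij: "bij_betw (hperm k) {\<tau>. \<tau> permutes {0..<k}} {\<sigma>. \<sigma> permutes {1..k}}"
proof (rule bij_betw_byWitness[where f'="hinv k"])
  show "\<forall>a\<in>{\<tau>. \<tau> permutes {0..<k}}. hinv k (hperm k a) = a"
  proof
    fix \<tau> assume a: "\<tau> \<in> {\<tau>. \<tau> permutes {0..<k}}"
    then have "\<And>x. x \<notin> {0..<k} \<Longrightarrow> \<tau> x = x" by (auto simp: permutes_def)
    then show "hinv k (hperm k \<tau>) = \<tau>" by (auto simp: hinv_def hperm_def fun_eq_iff)
  qed
  show "\<forall>a\<in>{\<sigma>. \<sigma> permutes {1..k}}. hperm k (hinv k a) = a"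
  proof
    fix \<sigma> assume a: "\<sigma> \<in> {\<sigma>. \<sigma> permutes {1..k}}"
    then have f: "\<And>x. x \<notin> {1..k} \<Longrightarrow> \<sigma> x = x" by (auto simp: permutes_def)
    have t: "\<And>i. i \<in> {1..k} \<Longrightarrow> \<sigma> i \<in> {1..k}" using a permutes_in_image by fastforce
    show "hperm k (hinv k \<sigma>) = \<sigma>"
    proof
      fix i show "hperm k (hinv k \<sigma>) i = \<sigma> i"
      proof (cases "i \<in> {1..k}")
        case True
        then have "\<sigma> i \<in> {1..k}" using t by auto
        then show ?thesis using True by (auto simp: hinv_def hperm_def)
      qed (auto simp: hperm_def f)
    qed
  qed
  show "hperm k ` {\<tau>. \<tau> permutes {0..<k}} \<subseteq> {\<sigma>. \<sigma> permutes {1..k}}" using hperm_permutes by auto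
  show "hinv k ` {\<sigma>. \<sigma> permutes {1..k}} \<subseteq> {\<tau>. \<tau> permutes {0..<k}}" using hinv_permutes by auto
qed


theorem mainTheorem5:
  fixes \<alpha> :: real and k :: nat
  assumes "\<alpha> > 0" and "k \<ge> 2"
  shows "(\<Sum>\<sigma> \<in> {\<sigma>. \<sigma> permutes {1..k}}. det (gamma_perm_mat k \<alpha> \<sigma>))
           = \<alpha> ^ (k * (k - 1)) * (\<Prod>j = 1..k. (fact (j - 1))\<^sup>2 * Gamma (1 + \<alpha> * real j))
       \<and> \<alpha> ^ (k * (k - 1)) * (\<Prod>j = 1..k. (fact (j - 1))\<^sup>2 * Gamma (1 + \<alpha> * real j)) > 0"
proof -
  define z where "z = (\<lambda>i::nat. real (Suc i) * \<alpha>)"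
  define G where "G = (\<Prod>i<k. Gamma (1 + z i))"
  define V where "V = (\<Prod>j<k. \<Prod>i<j. z j - z i)"
  define P where "P = mat k k (\<lambda>(i,j). pochhammer (1 + z i) j)"
  have gS: "\<And>j t. pochhammer (1 + t) (Suc j) = (t + (1 + real j)) * pochhammer (1 + t) j"
    by (simp add: pochhammer_Suc algebra_simps)
  have detP: "det P = V" unfolding P_def V_def
    using vander[of "\<lambda>j t. pochhammer (1 + t) j" "\<lambda>j. 1 + real j" k z] gS by simp
  have Pc: "P \<in> carrier_mat k k" by (simp add: P_def)
  have z_pos: "\<And>i. z i > 0" using assms by (simp add: z_def)
  have step1: "det (gamma_perm_mat k \<alpha> (hperm k \<tau>)) = G * V * (signof \<tau> * (\<Prod>i<k. pochhammer (1 + z (\<tau> i)) i))"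
    if \<tau>: "\<tau> permutes {0..<k}" for \<tau>
  proof -
    have t: "\<And>i. i < k \<Longrightarrow> \<tau> i < k" using \<tau> permutes_in_image by fastforce
    have "gamma_perm_mat k \<alpha> (hperm k \<tau>) = mat k k (\<lambda>(i,j). (Gamma (1 + z (\<tau> i)) * pochhammer (1 + z (\<tau> i)) i) * P $$ (\<tau> i, j))"
    proof (rule eq_matI)
      fix i j assume "i < dim_row (mat k k (\<lambda>(i,j). (Gamma (1 + z (\<tau> i)) * pochhammer (1 + z (\<tau> i)) i) * P $$ (\<tau> i, j)))"
        "j < dim_col (mat k k (\<lambda>(i,j). (Gamma (1 + z (\<tau> i)) * pochhammer (1 + z (\<tau> i)) i) * P $$ (\<tau> i, j)))"
      then have i: "i < k" and j: "j < k" by auto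
      have h: "hperm k \<tau> (i + 1) = Suc (\<tau> i)" using i by (simp add: hperm_def)
      have g1: "Gamma (real (j + 1) + real (Suc (\<tau> i)) * \<alpha>) = Gamma (1 + z (\<tau> i)) * pochhammer (1 + z (\<tau> i)) j"
      proof -
        have e: "real (j + 1) + real (Suc (\<tau> i)) * \<alpha> = 1 + z (\<tau> i) + real j" by (simp add: z_def)
        show ?thesis unfolding e by (rule Gamma_poch) (simp add: less_imp_le z_pos)
      qed
      have p1: "(\<Prod>r = 1..i + 1 - 1. real r + real (Suc (\<tau> i)) * \<alpha>) = pochhammer (1 + z (\<tau> i)) i"
        using prod_poch[of "z (\<tau> i)" i] by (simp add: z_def)
      show "gamma_perm_mat k \<alpha> (hperm k \<tau>) $$ (i, j) = mat k k (\<lambda>(i,j). (Gamma (1 + z (\<tau> i)) * pochhammer (1 + z (\<tau> i)) i) * P $$ (\<tau> i, j)) $$ (i, j)"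
        unfolding gamma_perm_mat_def Let_def using i j t[OF i]
        by (simp only: index_mat h g1 p1 split P_def) simp
    qed (auto simp: gamma_perm_mat_def)
    then have "det (gamma_perm_mat k \<alpha> (hperm k \<tau>)) = (\<Prod>i<k. Gamma (1 + z (\<tau> i)) * pochhammer (1 + z (\<tau> i)) i) * det (mat k k (\<lambda>(i,j). P $$ (\<tau> i, j)))"
      using det_rowscale[where n=k and a="\<lambda>i. Gamma (1 + z (\<tau> i)) * pochhammer (1 + z (\<tau> i)) i" and f="\<lambda>i j. P $$ (\<tau> i, j)"] by simp
    also have "det (mat k k (\<lambda>(i,j). P $$ (\<tau> i, j))) = signof \<tau> * V"
      using det_permute_rows[of P k \<tau>] \<tau> detP by (simp add: P_def)
    also have "(\<Prod>i<k. Gamma (1 + z (\<tau> i)) * pochhammer (1 + z (\<tau> i)) i) = (\<Prod>i<k. Gamma (1 + z (\<tau> i))) * (\<Prod>i<k. pochhammer (1 + z (\<tau> i)) i)"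
      by (rule prod.distrib)
    also have "(\<Prod>i<k. Gamma (1 + z (\<tau> i))) = G"
      using prod.permute[of \<tau> "{..<k}" "\<lambda>i. Gamma (1 + z i)"] \<tau> by (simp add: G_def atLeast0LessThan comp_def)
    finally show ?thesis by (simp add: ac_simps)
  qed
  have "(\<Sum>\<sigma> \<in> {\<sigma>. \<sigma> permutes {1..k}}. det (gamma_perm_mat k \<alpha> \<sigma>))
      = (\<Sum>\<tau> \<in> {\<tau>. \<tau> permutes {0..<k}}. det (gamma_perm_mat k \<alpha> (hperm k \<tau>)))"
    using sum.reindex_bij_betw[OF hperm_bij, of "\<lambda>\<sigma>. det (gamma_perm_mat k \<alpha> \<sigma>)" k] by simp
  also have "\<dots> = (\<Sum>\<tau> \<in> {\<tau>. \<tau> permutes {0..<k}}. G * V * (signof \<tau> * (\<Prod>i<k. pochhammer (1 + z (\<tau> i)) i)))"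
    by (rule sum.cong) (auto simp: step1)
  also have "\<dots> = G * V * (\<Sum>\<tau> \<in> {\<tau>. \<tau> permutes {0..<k}}. signof \<tau> * (\<Prod>i<k. pochhammer (1 + z (\<tau> i)) i))"
    by (simp add: sum_distrib_left)
  also have "(\<Sum>\<tau> \<in> {\<tau>. \<tau> permutes {0..<k}}. signof \<tau> * (\<Prod>i<k. pochhammer (1 + z (\<tau> i)) i)) = det (transpose_mat P)"
    unfolding det_def'[OF transpose_carrier_mat[THEN iffD2, OF Pc]]
  proof (rule sum.cong)
    fix p assume p: "p \<in> {p. p permutes {0..<k}}"
    have t: "\<And>i. i < k \<Longrightarrow> p i < k" using p permutes_in_image by fastforce
    then show "signof p * (\<Prod>i<k. pochhammer (1 + z (p i)) i) = signof p * (\<Prod>i = 0..<k. transpose_mat P $$ (i, p i))"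
      by (auto simp: P_def atLeast0LessThan intro!: prod.cong)
  qed simp
  also have "\<dots> = V" using det_transpose[of P k] detP by (simp add: P_def)
  finally have S: "(\<Sum>\<sigma> \<in> {\<sigma>. \<sigma> permutes {1..k}}. det (gamma_perm_mat k \<alpha> \<sigma>)) = G * V * V" .
  have Vj: "(\<Prod>i<j. z j - z i) = \<alpha> ^ j * fact j" for j
  proof -
    have "(\<Prod>i<j. z j - z i) = (\<Prod>i<j. \<alpha> * (real j - real i))"
      by (rule prod.cong) (auto simp: z_def algebra_simps)
    also have "\<dots> = \<alpha> ^ j * fact j" by (simp add: prod.distrib prod_diff_fact)
    finally show ?thesis .
  qed
  have VV: "V * V = (\<Prod>j<k. \<alpha> ^ (2 * j)) * (\<Prod>j<k. (fact j)\<^sup>2)"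
    unfolding V_def Vj prod.distrib[symmetric]
    by (rule prod.cong) (auto simp: power2_eq_square power_add[symmetric] mult_2)
  have R: "\<alpha> ^ (k * (k - 1)) * (\<Prod>j = 1..k. (fact (j - 1))\<^sup>2 * Gamma (1 + \<alpha> * real j))
      = (\<Prod>j<k. \<alpha> ^ (2 * j)) * (\<Prod>j<k. (fact j)\<^sup>2) * G"
    unfolding prod_shift1 pow_tri G_def z_def by (simp add: prod.distrib ac_simps)
  have pos: "\<alpha> ^ (k * (k - 1)) * (\<Prod>j = 1..k. (fact (j - 1))\<^sup>2 * Gamma (1 + \<alpha> * real j)) > 0"
    using assms by (intro mult_pos_pos prod_pos) (auto intro!: Gamma_real_pos add_pos_nonneg)
  show ?thesis using S R VV pos by (simp add: ac_simps)
qed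

end
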